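(* Let $p$ be a prime, $k$ an algebraically closed field of characteristic $p$, $a\in\mathbb N$ and $n\in\mathbb N$. Then the monomial $X^a$ lies in $\Sigma_n$ if and only if $S_p(a)\le n$. Consequently $\min\{n\in\mathbb N:X^a\in\Sigma_n\}=S_p(a)$.
   Context: An additive polynomial in $k[X]$ is a $k$-linear combination of the monomials $X^{p^j}$, $j\ge0$. For $t\ge1$, $\Sigma_t$ is the $k$-subspace of $k[X]$ spanned by $1$ and all products of at most $t$ additive polynomials; $\Sigma_0=k$. For $a\in\mathbb N$ with base-$p$ expansion $a=\sum_{i=0}^t a_ip^i$ ($0\le a_i\le p-1$), $S_p(a)=\sum_i a_i$ is the sum of its base-$p$ digits. *)

theory Defs
  imports "HOL-Computational_Algebra.Polynomial"
begin

definition additive_poly :: "nat \<Rightarrow> 'a::field poly \<Rightarrow> bool" where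
  "additive_poly p f \<longleftrightarrow> (\<exists>(c::nat \<Rightarrow> 'a) N. f = (\<Sum>j<N. monom (c j) (p ^ j)))"

definition Sigma :: "nat \<Rightarrow> nat \<Rightarrow> 'a::field poly set" where
  "Sigma p t = module.span smult
     (insert 1 {prod_list fs | fs. length fs \<le> t \<and> list_all (additive_poly p) fs})"

text \<open>Sum of base-p digits: the i-th digit of a is (a div p^i) mod p; digits beyond index a vanish.\<close>
definition digit_sum :: "nat \<Rightarrow> nat \<Rightarrow> nat" where
  "digit_sum p a = (\<Sum>i\<le>a. (a div p ^ i) mod p)"

end

theory Submission
  imports Defs
begin

interpretation pm: module "smult :: 'a::comm_ring_1 \<Rightarrow> 'a poly \<Rightarrow> 'a poly"
  by standard (simp_all add: smult_add_right smult_add_left)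

lemma ds_K:
  assumes p: "p \<ge> 2" and aK: "a < p ^ K"
  shows "digit_sum p a = (\<Sum>i<K. (a div p ^ i) mod p)"
proof -
  have van: "(a div p ^ i) mod p = 0" if "a < p ^ i" for i
    using that by simp
  have a1: "a < p ^ Suc a"
  proof -
    have "a < 2 ^ a" by (rule less_exp)
    also have "\<dots> \<le> p ^ a" using p by (simp add: power_mono)
    also have "\<dots> \<le> p ^ Suc a" using p by simp
    finally show ?thesis .
  qed
  have mono: "a < p ^ i" if "a < p ^ L" "L \<le> i" for L i
    using that p by (meson less_le_trans one_le_numeral order_trans power_increasing)
  define M where "M = max K (Suc a)"
  have "digit_sum p a = (\<Sum>i<Suc a. (a div p ^ i) mod p)"
    unfolding digit_sum_def using lessThan_Suc_atMost by simp
  also have "\<dots> = (\<Sum>i<M. (a div p ^ i) mod p)"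
    by (rule sum.mono_neutral_left) (auto simp: M_def intro!: van mono[OF a1])
  also have "\<dots> = (\<Sum>i<K. (a div p ^ i) mod p)"
    by (rule sum.mono_neutral_right) (auto simp: M_def intro!: van mono[OF aK])
  finally show ?thesis .
qed

lemma pow_big: "p \<ge> 2 \<Longrightarrow> (a::nat) < p ^ a"
proof -
  assume p: "p \<ge> 2"
  have "a < 2 ^ a" by (rule less_exp)
  also have "\<dots> \<le> p ^ a" using p by (simp add: power_mono)
  finally show ?thesis .
qed

lemma ds_rec:
  assumes p: "p \<ge> 2"
  shows "digit_sum p a = a mod p + digit_sum p (a div p)"
proof -
  have aK: "a < p ^ Suc a" using pow_big[OF p, of a] p
    by (meson less_le_trans one_le_numeral order_trans le_SucI order_refl power_increasing)
  have bK: "a div p < p ^ a"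
    using aK p by (simp add: div_less_iff_less_mult mult.commute)
  have "digit_sum p a = (\<Sum>i<Suc a. (a div p ^ i) mod p)" by (rule ds_K[OF p aK])
  also have "\<dots> = a mod p + (\<Sum>i<a. (a div p ^ Suc i) mod p)"
    by (subst sum.lessThan_Suc_shift) simp
  also have "(\<Sum>i<a. (a div p ^ Suc i) mod p) = (\<Sum>i<a. (a div p div p ^ i) mod p)"
    by (simp add: div_mult2_eq)
  also have "\<dots> = digit_sum p (a div p)" by (rule ds_K[OF p bK, symmetric])
  finally show ?thesis .
qed

lemma ds_0: "digit_sum p 0 = 0"
  by (simp add: digit_sum_def)

lemma ds_1: "p \<ge> 2 \<Longrightarrow> digit_sum p 1 = 1"
proof -
  assume p: "p \<ge> 2"
  have "(1::nat) mod p = 1" "(1::nat) div p = 0" using p by simp_all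
  then show ?thesis using ds_rec[OF p, of 1] by (simp add: ds_0)
qed

lemma ds_pow: "p \<ge> 2 \<Longrightarrow> digit_sum p (p ^ j) = 1"
proof (induction j)
  case 0 then show ?case using ds_1[of p] by simp
next
  case (Suc j)
  then show ?case using ds_rec[of p "p ^ Suc j"] by simp
qed

lemma divmod_carry:
  assumes "(r::nat) < p"
  shows "(r + p * q) mod p = r" "(r + p * q) div p = q"
  using assms by simp_all

lemma ds_add:
  assumes p: "p \<ge> 2"
  shows "digit_sum p (b + c) \<le> digit_sum p b + digit_sum p c"
proof -
  have "\<forall>b c. b + c = s \<longrightarrow> digit_sum p (b + c) \<le> digit_sum p b + digit_sum p c" for s
  proof (induction s rule: less_induct)
    case (less s)
    show ?case
    proof (intro allI impI)
      fix b c assume s: "b + c = s"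
      show "digit_sum p (b + c) \<le> digit_sum p b + digit_sum p c"
      proof (cases "b = 0 \<or> c = 0")
        case True then show ?thesis by (auto simp: ds_0)
      next
        case False
        define bm where "bm = b mod p"
        define cm where "cm = c mod p"
        define bd where "bd = b div p"
        define cd where "cd = c div p"
        have bdec: "b = bm + p * bd" "c = cm + p * cd" unfolding bm_def cm_def bd_def cd_def by simp_all
        have bml: "bm < p" "cm < p" unfolding bm_def cm_def using p by simp_all
        have Sb: "digit_sum p b = bm + digit_sum p bd" "digit_sum p c = cm + digit_sum p cd"
          using ds_rec[OF p, of b] ds_rec[OF p, of c] unfolding bm_def cm_def bd_def cd_def by simp_all
        have lt: "bd + cd < s"
        proof -
          have "bd \<le> b" "cd \<le> c" unfolding bd_def cd_def by simp_all
          moreover have "bd < b \<or> cd < c" using False p unfolding bd_def cd_def by auto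
          ultimately show ?thesis using s by linarith
        qed
        show ?thesis
        proof (cases "bm + cm < p")
          case True
          have e: "b + c = (bm + cm) + p * (bd + cd)"
            using bdec by (simp add: distrib_left)
          have "(b + c) mod p = bm + cm" "(b + c) div p = bd + cd"
            unfolding e using divmod_carry[OF True] by simp_all
          hence "digit_sum p (b + c) = bm + cm + digit_sum p (bd + cd)"
            using ds_rec[OF p, of "b+c"] by simp
          moreover have "digit_sum p (bd + cd) \<le> digit_sum p bd + digit_sum p cd"
            using less.IH[OF lt] by blast
          ultimately show ?thesis using Sb by linarith
        next
          case False
          have e: "b + c = (bm + cm) + p * (bd + cd)"
            using bdec by (simp add: distrib_left)
          have eq: "b + c = (bm + cm - p) + p * (bd + cd + 1)"
            unfolding e using False by (simp add: distrib_left)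
          have rl: "bm + cm - p < p" using bml by linarith
          have "(b + c) mod p = bm + cm - p" "(b + c) div p = bd + cd + 1"
            unfolding eq by (rule divmod_carry[OF rl])+
          hence r: "digit_sum p (b + c) = bm + cm - p + digit_sum p (bd + cd + 1)"
            using ds_rec[OF p, of "b+c"] by simp
          have lt2: "bd + cd + 1 < s"
          proof -
            have "s = (bm + cm - p) + p * (bd + cd + 1)" using eq s by simp
            then have "s \<ge> p * (bd + cd + 1)" by linarith
            then have "s \<ge> p + p * (bd + cd)" by (simp add: distrib_left)
            moreover have "p * (bd + cd) \<ge> 2 * (bd + cd)" using p by (rule mult_right_mono) simp
            moreover have "\<And>x y s p. p + x \<le> s \<Longrightarrow> 2 * y \<le> x \<Longrightarrow> 2 \<le> p \<Longrightarrow> y + 1 < (s::nat)"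
              by linarith
            ultimately show ?thesis using p by blast
          qed
          have "digit_sum p (bd + cd + 1) \<le> digit_sum p (bd + cd) + digit_sum p 1"
            using less.IH[OF lt2] by blast
          moreover have "digit_sum p (bd + cd) \<le> digit_sum p bd + digit_sum p cd"
            using less.IH[OF lt] by blast
          ultimately show ?thesis using r Sb ds_1[OF p] False p by linarith
        qed
      qed
    qed
  qed
  then show ?thesis by blast
qed


definition V :: "nat \<Rightarrow> nat \<Rightarrow> 'a::field poly set" where
  "V p n = {f. \<forall>b. coeff f b \<noteq> 0 \<longrightarrow> digit_sum p b \<le> n}"

lemma V_subspace: "pm.subspace (V p n)"
  unfolding pm.subspace_def V_def by (auto, metis add.right_neutral)

lemma V_mono: "s \<le> n \<Longrightarrow> V p s \<subseteq> V p n"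
  unfolding V_def by auto

lemma V_one: "1 \<in> V p n"
  unfolding V_def by (auto simp: coeff_1 ds_0 split: if_splits)

lemma V_mult:
  assumes p: "p \<ge> 2" and f: "f \<in> V p s" and g: "g \<in> V p t"
  shows "f * g \<in> V p (s + t)"
  unfolding V_def
proof (intro CollectI allI impI)
  fix b assume "coeff (f * g) b \<noteq> 0"
  then obtain i where i: "i \<le> b" "coeff f i * coeff g (b - i) \<noteq> 0"
    unfolding coeff_mult by (meson atMost_iff sum.neutral)
  then have "digit_sum p i \<le> s" "digit_sum p (b - i) \<le> t"
    using f g unfolding V_def by auto
  moreover have "digit_sum p b \<le> digit_sum p i + digit_sum p (b - i)"
    using ds_add[OF p, of i "b - i"] i(1) by simp
  ultimately show "digit_sum p b \<le> s + t" by linarith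
qed

lemma V_additive:
  assumes p: "p \<ge> 2" and f: "additive_poly p (f::'a::field poly)"
  shows "f \<in> V p 1"
proof -
  obtain c N where fe: "f = (\<Sum>j<N. monom (c j) (p ^ j))"
    using f unfolding additive_poly_def by blast
  show ?thesis unfolding V_def
  proof (intro CollectI allI impI)
    fix b assume "coeff f b \<noteq> 0"
    then have "(\<Sum>j<N. coeff (monom (c j) (p ^ j)) b) \<noteq> 0"
      unfolding fe coeff_sum .
    then obtain j where "coeff (monom (c j) (p ^ j)) b \<noteq> 0"
      by (meson sum.neutral)
    then have "b = p ^ j" by (simp add: coeff_monom split: if_splits)
    then show "digit_sum p b \<le> 1" using ds_pow[OF p] by simp
  qed
qed

lemma V_prod:
  assumes p: "p \<ge> 2"
  shows "list_all (additive_poly p) fs \<Longrightarrow> prod_list fs \<in> (V p (length fs) :: 'a::field poly set)"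
proof (induction fs)
  case Nil then show ?case by (simp add: V_one)
next
  case (Cons f fs)
  then have "f * prod_list fs \<in> V p (1 + length fs)"
    using V_mult[OF p V_additive[OF p]] by auto
  then show ?case by simp
qed

lemma Sigma_V:
  assumes p: "p \<ge> 2"
  shows "Sigma p n \<subseteq> (V p n :: 'a::field poly set)"
  unfolding Sigma_def
proof (rule pm.span_minimal[OF _ V_subspace])
  show "insert 1 {prod_list fs |fs. length fs \<le> n \<and> list_all (additive_poly p) fs} \<subseteq> V p n"
    using V_prod[OF p] V_mono V_one by blast
qed

lemma monom_pow_additive: "additive_poly p (monom (1::'a::field) (p ^ m))"
  unfolding additive_poly_def
proof (intro exI)
  show "monom (1::'a) (p ^ m) = (\<Sum>j<Suc m. monom (if j = m then 1 else 0) (p ^ j))"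
    by (simp add: sum.lessThan_Suc)
qed

lemma monom_as_prod:
  assumes p: "p \<ge> 2"
  shows "\<forall>m. \<exists>fs. length fs = digit_sum p a \<and> list_all (additive_poly p) fs
     \<and> prod_list fs = monom (1::'a::field) (p ^ m * a)"
proof (induction a rule: less_induct)
  case (less a)
  show ?case
  proof
    fix m
    show "\<exists>fs. length fs = digit_sum p a \<and> list_all (additive_poly p) fs
     \<and> prod_list fs = monom (1::'a::field) (p ^ m * a)"
    proof (cases "a = 0")
      case True then show ?thesis by (intro exI[of _ "[]"]) (simp add: ds_0)
    next
      case False
      then have "a div p < a" using p by simp
      from less.IH[OF this] obtain fs where fs: "length fs = digit_sum p (a div p)"
        "list_all (additive_poly p) fs" "prod_list fs = monom (1::'a) (p ^ Suc m * (a div p))"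
        by blast
      let ?gs = "replicate (a mod p) (monom (1::'a) (p ^ m)) @ fs"
      have "prod_list ?gs = monom 1 (p ^ m * (a mod p)) * monom 1 (p ^ Suc m * (a div p))"
        using fs(3) by (simp add: monom_power)
      also have "\<dots> = monom 1 (p ^ m * a)"
      proof -
        have d: "a mod p + p * (a div p) = a" by simp
        have "p ^ m * (a mod p) + p ^ Suc m * (a div p) = p ^ m * a"
          by (metis d distrib_left mult.assoc mult.left_commute power_Suc)
        then show ?thesis by (simp add: mult_monom)
      qed
      finally show ?thesis using fs ds_rec[OF p, of a]
        by (intro exI[of _ ?gs]) (auto simp: monom_pow_additive list_all_iff)
    qed
  qed
qed

theorem lemma3p5:
  fixes p a n :: nat
  assumes "prime p"
    and "CHAR('k::alg_closed_field) = p"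
  shows "((monom (1::'k) a \<in> Sigma p n) \<longleftrightarrow> digit_sum p a \<le> n)
         \<and> (LEAST m. monom (1::'k) a \<in> Sigma p m) = digit_sum p a"
proof -
  have p: "p \<ge> 2" using assms(1) by (simp add: prime_ge_2_nat)
  have iff: "(monom (1::'k) a \<in> Sigma p n) \<longleftrightarrow> digit_sum p a \<le> n" for n
  proof
    assume "monom (1::'k) a \<in> Sigma p n"
    then have "monom (1::'k) a \<in> V p n" using Sigma_V[OF p] by blast
    then have "coeff (monom (1::'k) a) a \<noteq> 0 \<longrightarrow> digit_sum p a \<le> n"
      unfolding V_def by blast
    then show "digit_sum p a \<le> n" by simp
  next
    assume le: "digit_sum p a \<le> n"
    obtain fs where fs: "length fs = digit_sum p a" "list_all (additive_poly p) fs"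
      "prod_list fs = monom (1::'k) (p ^ 0 * a)"
      using monom_as_prod[OF p, of a] by blast
    have f3: "prod_list fs = monom (1::'k) a" using fs(3) by simp
    have "length fs \<le> n \<and> list_all (additive_poly p) fs" using fs le by simp
    then have "prod_list fs \<in> {prod_list fs |fs. length fs \<le> n \<and> list_all (additive_poly p) fs}"
      by blast
    then have mem: "monom (1::'k) a \<in> insert 1 {prod_list fs |fs. length fs \<le> n \<and> list_all (additive_poly p) fs}"
      unfolding f3 by blast
    show "monom (1::'k) a \<in> Sigma p n"
      unfolding Sigma_def by (rule pm.span_base[OF mem])
  qed
  have "(LEAST m. monom (1::'k) a \<in> Sigma p m) = digit_sum p a"
    by (rule Least_equality) (simp_all add: iff)
  then show ?thesis using iff by blast
qed

end
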